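(* Let $n\ge2$, $C>0$, $x\in\mathcal{K}_S$, and $\tilde{x}=x+\eta$ with $\eta\sim\mathcal{N}(0,\sigma^2I_n)$, $\sigma>0$. Let $f$ denote the probability density of $\pi_S(\tilde{x})$ with respect to the $(n-1)$-dimensional Lebesgue measure on the hyperplane $\mathcal{K}_S$. Then for every pair $(i,j)$ and every $y\in\mathcal{K}_S$ with $x_i\le x_j$ and $y_i\le y_j$, $$f(y)\ge f(\mathrm{sw}_{ij}(y)).$$
   Context: $\mathcal{K}_S=\{v\in\mathbb{R}^n:\sum_iv_i=C\}$ and $\pi_S$ is the Euclidean projection onto $\mathcal{K}_S$. $\mathrm{sw}_{ij}(y)$ is the vector obtained from $y$ by swapping its $i$-th and $j$-th entries. *)

theory Defs
  imports "HOL-Probability.Probability"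
begin

text \<open>Points of R^n are represented as extensional functions on the index set {..<n}
  (the carrier of the product measure PiM {..<n} (\<lambda>_. lborel)).\<close>

definition K_S :: "nat \<Rightarrow> real \<Rightarrow> (nat \<Rightarrow> real) set" where
  "K_S n C = {v \<in> PiE {..<n} (\<lambda>_. UNIV). (\<Sum>i<n. v i) = C}"

definition eucl_proj :: "nat \<Rightarrow> (nat \<Rightarrow> real) set \<Rightarrow> (nat \<Rightarrow> real) \<Rightarrow> (nat \<Rightarrow> real)" where
  "eucl_proj n K z = (THE p. p \<in> K \<and>
      (\<forall>q\<in>K. (\<Sum>i<n. (z i - p i)^2) \<le> (\<Sum>i<n. (z i - q i)^2)))"

definition pi_S :: "nat \<Rightarrow> real \<Rightarrow> (nat \<Rightarrow> real) \<Rightarrow> (nat \<Rightarrow> real)" where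
  "pi_S n C = eucl_proj n (K_S n C)"

definition sw :: "nat \<Rightarrow> nat \<Rightarrow> (nat \<Rightarrow> real) \<Rightarrow> (nat \<Rightarrow> real)" where
  "sw i j y = (\<lambda>k. if k = i then y j else if k = j then y i else y k)"

definition gauss_iso :: "nat \<Rightarrow> real \<Rightarrow> (nat \<Rightarrow> real) measure" where
  "gauss_iso n \<sigma> = PiM {..<n} (\<lambda>_. density lborel (normal_density 0 \<sigma>))"

definition hyp_param :: "nat \<Rightarrow> real \<Rightarrow> (nat \<Rightarrow> real) \<Rightarrow> (nat \<Rightarrow> real)" where
  "hyp_param n C u = (\<lambda>i. if i < n - 1 then u i
                           else if i = n - 1 then C - (\<Sum>k<n-1. u k) else undefined)"

text \<open>(n-1)-dimensional Lebesgue (surface) measure on the hyperplane K_S, as a measure on R^n: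
  image of Lebesgue measure on R^(n-1) under the coordinate parametrisation, times
  its area factor sqrt n (the Gram determinant of the parametrisation is n).\<close>
definition hyp_measure :: "nat \<Rightarrow> real \<Rightarrow> (nat \<Rightarrow> real) measure" where
  "hyp_measure n C = distr (density (PiM {..<n-1} (\<lambda>_. lborel)) (\<lambda>_. ennreal (sqrt (real n))))
                           (PiM {..<n} (\<lambda>_. lborel)) (hyp_param n C)"

end

theory Submission
  imports Defs
begin



lemma pi_S_formula:
  assumes z: "z \<in> PiE {..<n} (\<lambda>_. UNIV)" and n: "n > 0"
  shows "pi_S n C z = (\<lambda>k\<in>{..<n}. z k - ((\<Sum>l<n. z l) - C) / n)"
proof -
  define t where "t = ((\<Sum>l<n. z l) - C) / n"
  define p where "p = (\<lambda>k\<in>{..<n}. z k - t)"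
  have pK: "p \<in> K_S n C"
  proof -
    have "(\<Sum>k<n. p k) = (\<Sum>k<n. z k) - n * t" by (simp add: p_def sum_subtractf)
    also have "\<dots> = C" using n by (simp add: t_def)
    finally show ?thesis by (simp add: K_S_def p_def)
  qed
  have key: "(\<Sum>i<n. (z i - q i)^2) = (\<Sum>i<n. (z i - p i)^2) + (\<Sum>i<n. (p i - q i)^2)"
    if q: "q \<in> K_S n C" for q
  proof -
    have sq: "(\<Sum>i<n. q i) = C" using q by (simp add: K_S_def)
    have sp: "(\<Sum>i<n. p i) = C" using pK by (simp add: K_S_def)
    have "(\<Sum>i<n. (z i - q i)^2) = (\<Sum>i<n. (z i - p i)^2 + (p i - q i)^2 + 2 * t * (p i - q i))"
      by (rule sum.cong) (auto simp: p_def power2_eq_square algebra_simps)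
    also have "\<dots> = (\<Sum>i<n. (z i - p i)^2) + (\<Sum>i<n. (p i - q i)^2) + 2 * t * ((\<Sum>i<n. p i) - (\<Sum>i<n. q i))"
      by (simp add: sum.distrib sum_distrib_left sum_subtractf algebra_simps)
    finally show ?thesis using sq sp by simp
  qed
  have "pi_S n C z = p"
    unfolding pi_S_def eucl_proj_def
  proof (rule the_equality)
    show "p \<in> K_S n C \<and> (\<forall>q\<in>K_S n C. (\<Sum>i<n. (z i - p i)\<^sup>2) \<le> (\<Sum>i<n. (z i - q i)\<^sup>2))"
    proof (intro conjI ballI)
      show "p \<in> K_S n C" by (fact pK)
      fix q assume "q \<in> K_S n C"
      from key[OF this] show "(\<Sum>i<n. (z i - p i)\<^sup>2) \<le> (\<Sum>i<n. (z i - q i)\<^sup>2)"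
        by (simp add: sum_nonneg)
    qed
  next
    fix p' assume H: "p' \<in> K_S n C \<and> (\<forall>q\<in>K_S n C. (\<Sum>i<n. (z i - p' i)\<^sup>2) \<le> (\<Sum>i<n. (z i - q i)\<^sup>2))"
    then have "(\<Sum>i<n. (z i - p' i)\<^sup>2) \<le> (\<Sum>i<n. (z i - p i)\<^sup>2)" using pK by blast
    with key[of p'] H have "(\<Sum>i<n. (p i - p' i)^2) \<le> 0" by simp
    then have "(\<Sum>i<n. (p i - p' i)^2) = 0" by (meson antisym sum_nonneg zero_le_power2)
    then have "\<forall>i\<in>{..<n}. (p i - p' i)^2 = 0"
      by (subst (asm) sum_nonneg_eq_0_iff) auto
    then have "\<forall>i<n. p' i = p i" by auto
    moreover have "p' \<in> PiE {..<n} (\<lambda>_. UNIV)" "p \<in> PiE {..<n} (\<lambda>_. UNIV)"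
      using H pK by (auto simp: K_S_def)
    ultimately show "p' = p" by (metis PiE_ext lessThan_iff)
  qed
  then show ?thesis by (simp add: p_def t_def)
qed



interpretation LB: product_sigma_finite "\<lambda>_. lborel :: real measure"
  by standard

lemma nn_integral_PiM_lborel_translate:
  assumes "finite I" and "f \<in> borel_measurable (PiM I (\<lambda>_. lborel::real measure))"
  shows "(\<integral>\<^sup>+x. f (\<lambda>i\<in>I. x i + c i) \<partial>PiM I (\<lambda>_. lborel)) = (\<integral>\<^sup>+x. f x \<partial>PiM I (\<lambda>_. lborel))"
  using assms
proof (induction I arbitrary: f rule: finite_induct)
  case empty
  show ?case
    by (intro nn_integral_cong) (auto simp: space_PiM)
next
  case (insert i I)
  note [measurable] = insert.prems
  have m1: "(\<lambda>x. f (\<lambda>j\<in>insert i I. x j + c j)) \<in> borel_measurable (PiM (insert i I) (\<lambda>_. lborel))"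
    by measurable
  define G where "G x = (\<integral>\<^sup>+y. f (x(i := y)) \<partial>lborel)" for x
  have Gm: "G \<in> borel_measurable (PiM I (\<lambda>_. lborel))"
    unfolding G_def by measurable
  have "(\<integral>\<^sup>+x. f (\<lambda>j\<in>insert i I. x j + c j) \<partial>PiM (insert i I) (\<lambda>_. lborel))
      = (\<integral>\<^sup>+x. (\<integral>\<^sup>+y. f (\<lambda>j\<in>insert i I. (x(i:=y)) j + c j) \<partial>lborel) \<partial>PiM I (\<lambda>_. lborel))"
    by (rule LB.product_nn_integral_insert[OF insert.hyps m1])
  also have "\<dots> = (\<integral>\<^sup>+x. G (\<lambda>j\<in>I. x j + c j) \<partial>PiM I (\<lambda>_. lborel))"
  proof (rule nn_integral_cong)
    fix x assume x: "x \<in> space (PiM I (\<lambda>_. lborel::real measure))"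
    have eq: "(\<lambda>j\<in>insert i I. (x(i:=y)) j + c j) = (\<lambda>j\<in>I. x j + c j)(i := y + c i)" for y
      using insert.hyps by (auto simp: fun_eq_iff)
    have "(\<integral>\<^sup>+y. f ((\<lambda>j\<in>I. x j + c j)(i := y)) \<partial>lborel)
        = (\<integral>\<^sup>+y. f ((\<lambda>j\<in>I. x j + c j)(i := c i + 1 * y)) \<partial>lborel)"
    proof -
      have gm: "(\<lambda>y. f ((\<lambda>j\<in>I. x j + c j)(i := y))) \<in> borel_measurable borel"
        using x insert.hyps by measurable
      show ?thesis using nn_integral_real_affine[OF gm, of 1 "c i"] by simp
    qed
    then show "(\<integral>\<^sup>+y. f (\<lambda>j\<in>insert i I. (x(i:=y)) j + c j) \<partial>lborel) = G (\<lambda>j\<in>I. x j + c j)"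
      unfolding G_def eq by (simp add: add.commute)
  qed
  also have "\<dots> = (\<integral>\<^sup>+x. G x \<partial>PiM I (\<lambda>_. lborel))"
    by (rule insert.IH[OF Gm])
  also have "\<dots> = (\<integral>\<^sup>+x. f x \<partial>PiM (insert i I) (\<lambda>_. lborel))"
    unfolding G_def by (rule LB.product_nn_integral_insert[symmetric]) (use insert.hyps in auto)
  finally show ?case .
qed

lemma PiM_density_lborel:
  assumes "finite I" and [measurable]: "d \<in> borel_measurable (lborel :: real measure)"
    and sf: "sigma_finite_measure (density lborel d)"
  shows "PiM I (\<lambda>_. density lborel d) = density (PiM I (\<lambda>_. lborel)) (\<lambda>x. \<Prod>i\<in>I. d (x i))"
proof -
  interpret D: product_sigma_finite "\<lambda>_. density lborel d"
    unfolding product_sigma_finite_def using sf by simp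
  show ?thesis
  proof (rule D.PiM_eqI[symmetric])
    show "finite I" by fact
    show "sets (density (PiM I (\<lambda>_. lborel)) (\<lambda>x. \<Prod>i\<in>I. d (x i))) = sets (PiM I (\<lambda>_. density lborel d))"
      by (auto intro!: sets_PiM_cong)
  next
    fix A assume A: "\<And>i. i \<in> I \<Longrightarrow> A i \<in> sets (density lborel d)"
    then have A': "\<And>i. i \<in> I \<Longrightarrow> A i \<in> sets lborel" by simp
    have "emeasure (density (PiM I (\<lambda>_. lborel)) (\<lambda>x. \<Prod>i\<in>I. d (x i))) (PiE I A)
        = (\<integral>\<^sup>+x. (\<Prod>i\<in>I. d (x i)) * indicator (PiE I A) x \<partial>PiM I (\<lambda>_. lborel))"
      using A' by (subst emeasure_density) (auto intro!: sets_PiM_I_finite \<open>finite I\<close>)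
    also have "\<dots> = (\<integral>\<^sup>+x. (\<Prod>i\<in>I. d (x i) * indicator (A i) (x i)) \<partial>PiM I (\<lambda>_. lborel))"
      using \<open>finite I\<close> by (intro nn_integral_cong) (auto simp: space_PiM indicator_def prod.distrib PiE_iff
            intro: prod_zero)
    also have "\<dots> = (\<Prod>i\<in>I. \<integral>\<^sup>+y. d y * indicator (A i) y \<partial>lborel)"
      using A' by (intro LB.product_nn_integral_prod \<open>finite I\<close>) auto
    also have "\<dots> = (\<Prod>i\<in>I. emeasure (density lborel d) (A i))"
      using A' by (intro prod.cong) (auto simp: emeasure_density)
    finally show "emeasure (density (PiM I (\<lambda>_. lborel)) (\<lambda>x. \<Prod>i\<in>I. d (x i))) (PiE I A)
        = (\<Prod>i\<in>I. emeasure (density lborel d) (A i))" .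
  qed
qed


lemma main_integral:
  fixes m :: nat and \<sigma> :: real and x :: "nat \<Rightarrow> real" and F
  assumes \<sigma>: "\<sigma> > 0" and F[measurable]: "F \<in> borel_measurable (PiM {..<m} (\<lambda>_. lborel::real measure))"
  shows "(\<integral>\<^sup>+\<eta>. F (\<lambda>k\<in>{..<m}. x k + \<eta> k - (\<Sum>l<Suc m. \<eta> l) / real (Suc m)) \<partial>gauss_iso (Suc m) \<sigma>)
       = (\<integral>\<^sup>+v. F v * (\<integral>\<^sup>+s. ennreal (real (Suc m) * (\<Prod>k<m. normal_density 0 \<sigma> (v k + (s - x k)))
              * normal_density 0 \<sigma> (real (Suc m) * s - (\<Sum>k<m. v k + (s - x k)))) \<partial>lborel) \<partial>PiM {..<m} (\<lambda>_. lborel))"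
proof -
  define nd where "nd = normal_density 0 \<sigma>"
  define n where "n = real (Suc m)"
  have ndm[measurable]: "nd \<in> borel_measurable borel" unfolding nd_def by simp
  have nd0: "0 \<le> nd t" for t unfolding nd_def by simp
  define N where "N = density lborel (\<lambda>w. ennreal (nd w))"
  have probN: "prob_space N" unfolding N_def nd_def by (rule prob_space_normal_density) (rule \<sigma>)
  have sfN: "sigma_finite_measure N" by (rule prob_space_imp_sigma_finite[OF probN])
  interpret NN: product_sigma_finite "\<lambda>_. N"
    unfolding product_sigma_finite_def using sfN by simp
  interpret PL: finite_product_sigma_finite "\<lambda>_. lborel::real measure" "{..<m}"
    by standard auto
  interpret P: pair_sigma_finite "PiM {..<m} (\<lambda>_. lborel::real measure)" "lborel :: real measure"
    by (intro pair_sigma_finite.intro PL.sigma_finite_measure_axioms) (rule lborel.sigma_finite_measure_axioms)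
  have sN[simp]: "sets N = sets borel" unfolding N_def by simp
  have g: "gauss_iso (Suc m) \<sigma> = PiM (insert m {..<m}) (\<lambda>_. N)"
    unfolding gauss_iso_def N_def nd_def by (simp add: lessThan_Suc)
  have PD: "PiM {..<m} (\<lambda>_. N) = density (PiM {..<m} (\<lambda>_. lborel)) (\<lambda>x. \<Prod>i\<in>{..<m}. ennreal (nd (x i)))"
    unfolding N_def by (rule PiM_density_lborel) (use sfN in \<open>auto simp: N_def\<close>)
  define S where "S \<eta> = (\<Sum>l<m. \<eta> l)" for \<eta> :: "nat \<Rightarrow> real"
  have "(\<integral>\<^sup>+\<eta>. F (\<lambda>k\<in>{..<m}. x k + \<eta> k - (\<Sum>l<Suc m. \<eta> l) / real (Suc m)) \<partial>gauss_iso (Suc m) \<sigma>)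
      = (\<integral>\<^sup>+\<eta>. (\<integral>\<^sup>+w. F (\<lambda>k\<in>{..<m}. x k + (\<eta>(m:=w)) k - (\<Sum>l<Suc m. (\<eta>(m:=w)) l) / n) \<partial>N) \<partial>PiM {..<m} (\<lambda>_. N))"
  proof -
    have sP: "sets (PiM (insert m {..<m}) (\<lambda>_. N)) = sets (PiM (insert m {..<m}) (\<lambda>_. lborel))"
      by (rule sets_PiM_cong) auto
    have mF: "(\<lambda>\<eta>. F (\<lambda>k\<in>{..<m}. x k + \<eta> k - (\<Sum>l<Suc m. \<eta> l) / n)) \<in> borel_measurable (PiM (insert m {..<m}) (\<lambda>_. lborel))"
      unfolding n_def lessThan_Suc by measurable
    show ?thesis
      unfolding g n_def
      by (rule NN.product_nn_integral_insert) (use mF in \<open>simp_all add: measurable_cong_sets[OF sP refl] n_def\<close>)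
  qed
  also have "\<dots> = (\<integral>\<^sup>+\<eta>. (\<integral>\<^sup>+s. ennreal (n * nd (n * s - S \<eta>)) *
          F (\<lambda>k\<in>{..<m}. x k + \<eta> k - s) \<partial>lborel) \<partial>PiM {..<m} (\<lambda>_. N))"
  proof (rule nn_integral_cong)
    fix \<eta> :: "nat \<Rightarrow> real" assume \<eta>: "\<eta> \<in> space (PiM {..<m} (\<lambda>_. N))"
    have upd: "(\<lambda>k\<in>{..<m}. x k + (\<eta>(m:=w)) k - (\<Sum>l<Suc m. (\<eta>(m:=w)) l) / n)
             = (\<lambda>k\<in>{..<m}. x k + \<eta> k - (S \<eta> + w) / n)" for w
      by (auto simp: S_def fun_eq_iff)
    have gm: "(\<lambda>w. ennreal (nd w) * F (\<lambda>k\<in>{..<m}. x k + \<eta> k - (S \<eta> + w) / n)) \<in> borel_measurable borel"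
      by measurable
    have n0: "n \<noteq> 0" "n > 0" unfolding n_def by auto
    have "(\<integral>\<^sup>+w. F (\<lambda>k\<in>{..<m}. x k + (\<eta>(m:=w)) k - (\<Sum>l<Suc m. (\<eta>(m:=w)) l) / n) \<partial>N)
        = (\<integral>\<^sup>+w. ennreal (nd w) * F (\<lambda>k\<in>{..<m}. x k + \<eta> k - (S \<eta> + w) / n) \<partial>lborel)"
      unfolding upd N_def by (rule nn_integral_density) measurable
    also have "\<dots> = ennreal n * (\<integral>\<^sup>+s. ennreal (nd (- S \<eta> + n * s)) * F (\<lambda>k\<in>{..<m}. x k + \<eta> k - s) \<partial>lborel)"
      using nn_integral_real_affine[OF gm n0(1), of "- S \<eta>"] n0 by (simp add: abs_of_pos)
    also have "\<dots> = (\<integral>\<^sup>+s. ennreal (n * nd (n * s - S \<eta>)) * F (\<lambda>k\<in>{..<m}. x k + \<eta> k - s) \<partial>lborel)"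
      by (subst nn_integral_cmult[symmetric], measurable)
         (auto intro!: nn_integral_cong simp: ennreal_mult' mult.assoc n0(2)[THEN less_imp_le])
    finally show "(\<integral>\<^sup>+w. F (\<lambda>k\<in>{..<m}. x k + (\<eta>(m:=w)) k - (\<Sum>l<Suc m. (\<eta>(m:=w)) l) / n) \<partial>N)
        = (\<integral>\<^sup>+s. ennreal (n * nd (n * s - S \<eta>)) * F (\<lambda>k\<in>{..<m}. x k + \<eta> k - s) \<partial>lborel)" .
  qed
  also have "\<dots> = (\<integral>\<^sup>+\<eta>. (\<Prod>i\<in>{..<m}. ennreal (nd (\<eta> i))) * (\<integral>\<^sup>+s. ennreal (n * nd (n * s - S \<eta>)) *
          F (\<lambda>k\<in>{..<m}. x k + \<eta> k - s) \<partial>lborel) \<partial>PiM {..<m} (\<lambda>_. lborel))"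
    unfolding PD by (rule nn_integral_density) (unfold S_def, measurable)
  also have "\<dots> = (\<integral>\<^sup>+\<eta>. (\<integral>\<^sup>+s. ennreal (n * (\<Prod>i<m. nd (\<eta> i)) * nd (n * s - S \<eta>)) *
          F (\<lambda>k\<in>{..<m}. x k + \<eta> k - s) \<partial>lborel) \<partial>PiM {..<m} (\<lambda>_. lborel))"
  proof (intro nn_integral_cong, subst nn_integral_cmult[symmetric], unfold S_def, measurable, rule nn_integral_cong)
    fix \<eta> :: "nat \<Rightarrow> real" and s :: real
    have P: "0 \<le> (\<Prod>i<m. nd (\<eta> i))" by (simp add: prod_nonneg nd0)
    have Q: "0 \<le> n * nd (n * s - (\<Sum>l<m. \<eta> l))" unfolding n_def by (simp add: nd0)
    have "ennreal (\<Prod>i<m. nd (\<eta> i)) * (ennreal (n * nd (n * s - (\<Sum>l<m. \<eta> l))) * F (\<lambda>k\<in>{..<m}. x k + \<eta> k - s))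
        = ennreal ((\<Prod>i<m. nd (\<eta> i)) * (n * nd (n * s - (\<Sum>l<m. \<eta> l)))) * F (\<lambda>k\<in>{..<m}. x k + \<eta> k - s)"
      using P Q by (simp add: ennreal_mult mult.assoc)
    also have "(\<Prod>i<m. nd (\<eta> i)) * (n * nd (n * s - (\<Sum>l<m. \<eta> l))) = n * (\<Prod>i<m. nd (\<eta> i)) * nd (n * s - (\<Sum>l<m. \<eta> l))"
      by simp
    finally show "(\<Prod>i\<in>{..<m}. ennreal (nd (\<eta> i))) * (ennreal (n * nd (n * s - (\<Sum>l<m. \<eta> l))) * F (\<lambda>k\<in>{..<m}. x k + \<eta> k - s))
        = ennreal (n * (\<Prod>i<m. nd (\<eta> i)) * nd (n * s - (\<Sum>l<m. \<eta> l))) * F (\<lambda>k\<in>{..<m}. x k + \<eta> k - s)"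
      unfolding prod_ennreal[of "{..<m}" "\<lambda>i. nd (\<eta> i)", OF nd0] .
  qed
  also have "\<dots> = (\<integral>\<^sup>+s. (\<integral>\<^sup>+\<eta>. ennreal (n * (\<Prod>i<m. nd (\<eta> i)) * nd (n * s - S \<eta>)) *
          F (\<lambda>k\<in>{..<m}. x k + \<eta> k - s) \<partial>PiM {..<m} (\<lambda>_. lborel)) \<partial>lborel)"
    by (rule P.Fubini'[symmetric]) (unfold S_def, measurable)
  also have "\<dots> = (\<integral>\<^sup>+s. (\<integral>\<^sup>+v. ennreal (n * (\<Prod>k<m. nd (v k + (s - x k))) * nd (n * s - (\<Sum>k<m. v k + (s - x k)))) *
          F v \<partial>PiM {..<m} (\<lambda>_. lborel)) \<partial>lborel)"
  proof (rule nn_integral_cong)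
    fix s :: real
    have hm: "(\<lambda>\<eta>. ennreal (n * (\<Prod>i<m. nd (\<eta> i)) * nd (n * s - S \<eta>)) * F (\<lambda>k\<in>{..<m}. x k + \<eta> k - s))
        \<in> borel_measurable (PiM {..<m} (\<lambda>_. lborel))" unfolding S_def by measurable
    show "(\<integral>\<^sup>+\<eta>. ennreal (n * (\<Prod>i<m. nd (\<eta> i)) * nd (n * s - S \<eta>)) * F (\<lambda>k\<in>{..<m}. x k + \<eta> k - s) \<partial>PiM {..<m} (\<lambda>_. lborel))
       = (\<integral>\<^sup>+v. ennreal (n * (\<Prod>k<m. nd (v k + (s - x k))) * nd (n * s - (\<Sum>k<m. v k + (s - x k)))) * F v \<partial>PiM {..<m} (\<lambda>_. lborel))"
    proof -
      note T = nn_integral_PiM_lborel_translate[OF finite_lessThan hm, of "\<lambda>k. s - x k"]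
      have "(\<integral>\<^sup>+v. ennreal (n * (\<Prod>k<m. nd (v k + (s - x k))) * nd (n * s - (\<Sum>k<m. v k + (s - x k)))) * F v \<partial>PiM {..<m} (\<lambda>_. lborel))
          = (\<integral>\<^sup>+v. ennreal (n * (\<Prod>i<m. nd ((\<lambda>i\<in>{..<m}. v i + (s - x i)) i)) * nd (n * s - S (\<lambda>i\<in>{..<m}. v i + (s - x i)))) *
            F (\<lambda>k\<in>{..<m}. x k + (\<lambda>i\<in>{..<m}. v i + (s - x i)) k - s) \<partial>PiM {..<m} (\<lambda>_. lborel))"
      proof (rule nn_integral_cong)
        fix v :: "nat \<Rightarrow> real" assume v: "v \<in> space (PiM {..<m} (\<lambda>_. lborel::real measure))"
        have "(\<lambda>k\<in>{..<m}. x k + (\<lambda>i\<in>{..<m}. v i + (s - x i)) k - s) = v"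
          using v by (auto simp: space_PiM fun_eq_iff PiE_def extensional_def)
        then show "ennreal (n * (\<Prod>k<m. nd (v k + (s - x k))) * nd (n * s - (\<Sum>k<m. v k + (s - x k)))) * F v
            = ennreal (n * (\<Prod>i<m. nd ((\<lambda>i\<in>{..<m}. v i + (s - x i)) i)) * nd (n * s - S (\<lambda>i\<in>{..<m}. v i + (s - x i)))) *
            F (\<lambda>k\<in>{..<m}. x k + (\<lambda>i\<in>{..<m}. v i + (s - x i)) k - s)"
          by (simp add: S_def)
      qed
      also have "\<dots> = (\<integral>\<^sup>+\<eta>. ennreal (n * (\<Prod>i<m. nd (\<eta> i)) * nd (n * s - S \<eta>)) * F (\<lambda>k\<in>{..<m}. x k + \<eta> k - s) \<partial>PiM {..<m} (\<lambda>_. lborel))"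
        using T by simp
      finally show ?thesis by simp
    qed
  qed
  also have "\<dots> = (\<integral>\<^sup>+v. (\<integral>\<^sup>+s. ennreal (n * (\<Prod>k<m. nd (v k + (s - x k))) * nd (n * s - (\<Sum>k<m. v k + (s - x k)))) *
          F v \<partial>lborel) \<partial>PiM {..<m} (\<lambda>_. lborel))"
    by (rule P.Fubini') measurable
  also have "\<dots> = (\<integral>\<^sup>+v. F v * (\<integral>\<^sup>+s. ennreal (n * (\<Prod>k<m. nd (v k + (s - x k))) * nd (n * s - (\<Sum>k<m. v k + (s - x k)))) \<partial>lborel) \<partial>PiM {..<m} (\<lambda>_. lborel))"
    by (intro nn_integral_cong, subst nn_integral_cmult[symmetric]) (measurable, simp add: mult.commute)
  finally show ?thesis unfolding nd_def n_def .
qed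



lemma nn_integral_nd: "\<tau> > 0 \<Longrightarrow> (\<integral>\<^sup>+s. ennreal (normal_density 0 \<tau> s) \<partial>lborel) = 1"
  by (subst nn_integral_eq_integral) auto

lemma q_closed:
  fixes m :: nat and \<sigma> :: real and x v :: "nat \<Rightarrow> real"
  assumes \<sigma>: "\<sigma> > 0"
  shows "(\<integral>\<^sup>+s. ennreal (real (Suc m) * (\<Prod>k<m. normal_density 0 \<sigma> (v k + (s - x k)))
              * normal_density 0 \<sigma> (real (Suc m) * s - (\<Sum>k<m. v k + (s - x k)))) \<partial>lborel)
       = ennreal (real (Suc m) * (1 / sqrt (2 * pi * \<sigma>\<^sup>2)) ^ Suc m * sqrt (2 * pi * (\<sigma> / sqrt (real (Suc m)))\<^sup>2)
            * exp (- ((\<Sum>k<m. (v k - x k)\<^sup>2) + (\<Sum>k<m. v k - x k)\<^sup>2) / (2 * \<sigma>\<^sup>2)))"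
proof -
  define n where "n = real (Suc m)"
  define c where "c = 1 / sqrt (2 * pi * \<sigma>\<^sup>2)"
  define a where "a k = v k - x k" for k
  define D where "D = (\<Sum>k<m. (a k)\<^sup>2) + (\<Sum>k<m. a k)\<^sup>2"
  define \<tau> where "\<tau> = \<sigma> / sqrt n"
  have n0: "n > 0" unfolding n_def by simp
  have \<tau>0: "\<tau> > 0" unfolding \<tau>_def using n0 \<sigma> by simp
  have \<tau>2: "\<tau>\<^sup>2 = \<sigma>\<^sup>2 / n" unfolding \<tau>_def using n0 by (simp add: power_divide)
  have nd: "normal_density 0 \<sigma> z = c * exp (- z\<^sup>2 / (2 * \<sigma>\<^sup>2))" for z
    unfolding normal_density_def c_def by simp
  have ident: "(\<Sum>k<m. (a k + s)\<^sup>2) + (n * s - (\<Sum>k<m. a k + s))\<^sup>2 = D + n * s\<^sup>2" for s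
  proof -
    have "(\<Sum>k<m. (a k + s)\<^sup>2) = (\<Sum>k<m. (a k)\<^sup>2) + 2 * s * (\<Sum>k<m. a k) + real m * s\<^sup>2"
      by (simp add: power2_sum sum.distrib sum_distrib_left algebra_simps)
    moreover have "(\<Sum>k<m. a k + s) = (\<Sum>k<m. a k) + real m * s" by (simp add: sum.distrib)
    ultimately show ?thesis unfolding D_def n_def by (simp add: power2_eq_square algebra_simps)
  qed
  have pw: "n * (\<Prod>k<m. normal_density 0 \<sigma> (v k + (s - x k))) * normal_density 0 \<sigma> (n * s - (\<Sum>k<m. v k + (s - x k)))
      = (n * c ^ Suc m * sqrt (2 * pi * \<tau>\<^sup>2) * exp (- D / (2 * \<sigma>\<^sup>2))) * normal_density 0 \<tau> s" for s
  proof -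
    have e1: "v k + (s - x k) = a k + s" for k unfolding a_def by simp
    have "(\<Prod>k<m. normal_density 0 \<sigma> (v k + (s - x k))) = c ^ m * exp (- (\<Sum>k<m. (a k + s)\<^sup>2) / (2 * \<sigma>\<^sup>2))"
      unfolding e1 nd by (simp add: prod.distrib exp_sum[symmetric] sum_divide_distrib[symmetric] sum_negf)
    moreover have "(\<Sum>k<m. v k + (s - x k)) = (\<Sum>k<m. a k + s)" unfolding e1 ..
    moreover have "normal_density 0 \<tau> s = 1 / sqrt (2 * pi * \<tau>\<^sup>2) * exp (- (n * s\<^sup>2) / (2 * \<sigma>\<^sup>2))"
      unfolding normal_density_def \<tau>2 using n0 by (simp add: field_simps)
    moreover have "sqrt (2 * pi * \<tau>\<^sup>2) > 0" using \<tau>0 by simp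
    moreover have "exp (- (\<Sum>k<m. (a k + s)\<^sup>2) / (2 * \<sigma>\<^sup>2)) * exp (- (n * s - (\<Sum>k<m. a k + s))\<^sup>2 / (2 * \<sigma>\<^sup>2))
        = exp (- D / (2 * \<sigma>\<^sup>2)) * exp (- (n * s\<^sup>2) / (2 * \<sigma>\<^sup>2))"
    proof -
      have "exp (- (\<Sum>k<m. (a k + s)\<^sup>2) / (2 * \<sigma>\<^sup>2)) * exp (- (n * s - (\<Sum>k<m. a k + s))\<^sup>2 / (2 * \<sigma>\<^sup>2))
          = exp (- ((\<Sum>k<m. (a k + s)\<^sup>2) + (n * s - (\<Sum>k<m. a k + s))\<^sup>2) / (2 * \<sigma>\<^sup>2))"
        by (simp add: exp_add[symmetric] diff_divide_distrib)
      also have "\<dots> = exp (- (D + n * s\<^sup>2) / (2 * \<sigma>\<^sup>2))" by (simp only: ident)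
      also have "\<dots> = exp (- D / (2 * \<sigma>\<^sup>2)) * exp (- (n * s\<^sup>2) / (2 * \<sigma>\<^sup>2))"
        by (simp add: exp_add[symmetric] diff_divide_distrib)
      finally show ?thesis .
    qed
    moreover have "\<tau> \<noteq> 0" using \<tau>0 by simp
    ultimately show ?thesis
      by (simp add: nd field_simps)
  qed
  have K0: "0 \<le> n * c ^ Suc m * sqrt (2 * pi * \<tau>\<^sup>2) * exp (- D / (2 * \<sigma>\<^sup>2))"
    unfolding c_def using n0 by simp
  have "(\<integral>\<^sup>+s. ennreal (n * (\<Prod>k<m. normal_density 0 \<sigma> (v k + (s - x k)))
              * normal_density 0 \<sigma> (n * s - (\<Sum>k<m. v k + (s - x k)))) \<partial>lborel)
      = (\<integral>\<^sup>+s. ennreal (n * c ^ Suc m * sqrt (2 * pi * \<tau>\<^sup>2) * exp (- D / (2 * \<sigma>\<^sup>2))) * ennreal (normal_density 0 \<tau> s) \<partial>lborel)"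
    by (intro nn_integral_cong) (simp only: pw ennreal_mult[OF K0 normal_density_nonneg])
  also have "\<dots> = ennreal (n * c ^ Suc m * sqrt (2 * pi * \<tau>\<^sup>2) * exp (- D / (2 * \<sigma>\<^sup>2)))"
    by (simp add: nn_integral_cmult nn_integral_nd[OF \<tau>0])
  finally show ?thesis unfolding n_def c_def \<tau>_def D_def a_def .
qed




lemma hyp_param_Suc: "hyp_param (Suc m) C u = (\<lambda>i\<in>{..<Suc m}. if i < m then u i else C - (\<Sum>k<m. u k))"
  unfolding hyp_param_def by (auto simp: fun_eq_iff)

lemma hyp_param_meas[measurable]:
  "hyp_param (Suc m) C \<in> measurable (PiM {..<m} (\<lambda>_. lborel)) (PiM {..<Suc m} (\<lambda>_. lborel::real measure))"
  unfolding hyp_param_Suc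
proof (rule measurable_restrict)
  fix i assume "i \<in> {..<Suc m}"
  show "(\<lambda>u. if i < m then u i else C - (\<Sum>k<m. u k)) \<in> measurable (PiM {..<m} (\<lambda>_. lborel)) lborel"
  proof (cases "i < m")
    case True then show ?thesis by (simp add: measurable_component_singleton)
  next
    case False
    have "(\<lambda>u. C - (\<Sum>k<m. u k)) \<in> measurable (PiM {..<m} (\<lambda>_. lborel)) (lborel::real measure)"
      by measurable
    then show ?thesis using False by simp
  qed
qed

lemma restrict_hyp_param: "v \<in> PiE {..<m} (\<lambda>_. UNIV) \<Longrightarrow> restrict (hyp_param (Suc m) C v) {..<m} = v"
  unfolding hyp_param_Suc by (auto simp: fun_eq_iff PiE_def extensional_def)

lemma pi_S_hyp:
  assumes x: "x \<in> K_S (Suc m) C"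
  shows "pi_S (Suc m) C (\<lambda>k\<in>{..<Suc m}. x k + \<eta> k)
       = hyp_param (Suc m) C (\<lambda>k\<in>{..<m}. x k + \<eta> k - (\<Sum>l<Suc m. \<eta> l) / real (Suc m))"
proof -
  have sx: "(\<Sum>k<Suc m. x k) = C" using x by (simp add: K_S_def)
  have z: "(\<lambda>k\<in>{..<Suc m}. x k + \<eta> k) \<in> PiE {..<Suc m} (\<lambda>_. UNIV)" by simp
  have s2: "(\<Sum>l<Suc m. (\<lambda>k\<in>{..<Suc m}. x k + \<eta> k) l) = C + (\<Sum>l<Suc m. \<eta> l)"
    using sx by (simp add: sum.distrib)
  have "pi_S (Suc m) C (\<lambda>k\<in>{..<Suc m}. x k + \<eta> k)
      = (\<lambda>k\<in>{..<Suc m}. (\<lambda>k\<in>{..<Suc m}. x k + \<eta> k) k - ((\<Sum>l<Suc m. (\<lambda>k\<in>{..<Suc m}. x k + \<eta> k) l) - C) / real (Suc m))"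
    by (rule pi_S_formula[OF z]) simp
  also have "\<dots> = (\<lambda>k\<in>{..<Suc m}. x k + \<eta> k - (\<Sum>l<Suc m. \<eta> l) / real (Suc m))"
    unfolding s2 by (intro restrict_ext) simp
  also have "\<dots> = hyp_param (Suc m) C (\<lambda>k\<in>{..<m}. x k + \<eta> k - (\<Sum>l<Suc m. \<eta> l) / real (Suc m))"
  proof -
    have "x m + \<eta> m - (\<Sum>l<Suc m. \<eta> l) / real (Suc m) = C - (\<Sum>k<m. x k + \<eta> k - (\<Sum>l<Suc m. \<eta> l) / real (Suc m))"
    proof -
      define T where "T = (\<Sum>l<Suc m. \<eta> l)"
      have "(\<Sum>k<m. x k + \<eta> k - T / real (Suc m))
          = (\<Sum>k<m. x k) + (\<Sum>k<m. \<eta> k) - real m * (T / real (Suc m))"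
        by (simp only: sum.distrib sum_subtractf sum_constant card_lessThan)
      moreover have "(\<Sum>k<m. x k) = C - x m" using sx sum.lessThan_Suc[of x m] by linarith
      moreover have "(\<Sum>k<m. \<eta> k) = T - \<eta> m" unfolding T_def using sum.lessThan_Suc[of \<eta> m] by linarith
      moreover have "x m + \<eta> m - T / real (Suc m) = C - ((C - x m) + (T - \<eta> m) - real m * (T / real (Suc m)))"
      proof -
        have "T = real (Suc m) * (T / real (Suc m))" by simp
        also have "\<dots> = real m * (T / real (Suc m)) + T / real (Suc m)" unfolding of_nat_Suc by (simp only: distrib_right mult_1_left add.commute)
        finally have "T / real (Suc m) = T - real m * (T / real (Suc m))" by linarith
        then show ?thesis by linarith
      qed
      ultimately have "x m + \<eta> m - T / real (Suc m) = C - (\<Sum>k<m. x k + \<eta> k - T / real (Suc m))"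
        by linarith
      then show ?thesis unfolding T_def .
    qed
    note last = this
    show ?thesis unfolding hyp_param_Suc
    proof (intro restrict_ext)
      fix k assume k: "k \<in> {..<Suc m}"
      show "x k + \<eta> k - (\<Sum>l<Suc m. \<eta> l) / real (Suc m) =
         (if k < m then (\<lambda>k\<in>{..<m}. x k + \<eta> k - (\<Sum>l<Suc m. \<eta> l) / real (Suc m)) k
          else C - (\<Sum>j<m. (\<lambda>k\<in>{..<m}. x k + \<eta> k - (\<Sum>l<Suc m. \<eta> l) / real (Suc m)) j))"
      proof (cases "k < m")
        case True then show ?thesis by simp
      next
        case False
        with k have km: "k = m" by simp
        have "(\<Sum>j<m. (\<lambda>k\<in>{..<m}. x k + \<eta> k - (\<Sum>l<Suc m. \<eta> l) / real (Suc m)) j)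
            = (\<Sum>j<m. x j + \<eta> j - (\<Sum>l<Suc m. \<eta> l) / real (Suc m))"
          by (intro sum.cong) auto
        then show ?thesis using False km last by (simp only: if_False)
      qed
    qed
  qed
  finally show ?thesis .
qed




definition Kc :: "nat \<Rightarrow> real \<Rightarrow> real" where
  "Kc m \<sigma> = real (Suc m) * (1 / sqrt (2 * pi * \<sigma>\<^sup>2)) ^ Suc m * sqrt (2 * pi * (\<sigma> / sqrt (real (Suc m)))\<^sup>2)"
definition Dq :: "nat \<Rightarrow> (nat \<Rightarrow> real) \<Rightarrow> (nat \<Rightarrow> real) \<Rightarrow> real" where
  "Dq m x v = (\<Sum>k<m. (v k - x k)\<^sup>2) + (\<Sum>k<m. v k - x k)\<^sup>2"

lemma ae_density:
  fixes m :: nat and C \<sigma> :: real and x :: "nat \<Rightarrow> real" and f :: "(nat \<Rightarrow> real) \<Rightarrow> real"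
  assumes x_in: "x \<in> K_S (Suc m) C" and \<sigma>: "\<sigma> > 0"
    and f_meas[measurable]: "f \<in> borel_measurable (PiM {..<Suc m} (\<lambda>_. lborel))"
    and f_density: "distr (gauss_iso (Suc m) \<sigma>) (PiM {..<Suc m} (\<lambda>_. lborel))
                       (\<lambda>\<eta>. pi_S (Suc m) C (\<lambda>k\<in>{..<Suc m}. x k + \<eta> k))
                     = density (hyp_measure (Suc m) C) (\<lambda>v. ennreal (f v))"
  shows "AE v in PiM {..<m} (\<lambda>_. lborel). ennreal (Kc m \<sigma> * exp (- Dq m x v / (2 * \<sigma>\<^sup>2)))
            = ennreal (sqrt (real (Suc m))) * ennreal (f (hyp_param (Suc m) C v))"
proof -
  define Lm where "Lm = PiM {..<m} (\<lambda>_. lborel::real measure)"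
  define Ln where "Ln = PiM {..<Suc m} (\<lambda>_. lborel::real measure)"
  define G where "G = gauss_iso (Suc m) \<sigma>"
  define uu where "uu \<eta> = (\<lambda>k\<in>{..<m}. x k + \<eta> k - (\<Sum>l<Suc m. \<eta> l) / real (Suc m))" for \<eta> :: "nat \<Rightarrow> real"
  define q where "q v = ennreal (Kc m \<sigma> * exp (- Dq m x v / (2 * \<sigma>\<^sup>2)))" for v
  define h where "h = hyp_param (Suc m) C"
  interpret PL: finite_product_sigma_finite "\<lambda>_. lborel::real measure" "{..<m}"
    by standard auto
  have sG: "sets G = sets Ln" unfolding G_def gauss_iso_def Ln_def by (rule sets_PiM_cong) auto
  have spG: "space G = space Ln" using sG by (rule sets_eq_imp_space_eq)
  have uu_meas0: "uu \<in> measurable Ln Lm" unfolding uu_def Ln_def Lm_def by measurable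
  have uu_meas: "uu \<in> measurable G Lm" using uu_meas0 by (simp add: measurable_cong_sets[OF sG refl])
  have q_meas[measurable]: "q \<in> borel_measurable Lm" unfolding q_def Dq_def Lm_def by measurable
  have h_meas: "h \<in> measurable Lm Ln" unfolding h_def Lm_def Ln_def by (rule hyp_param_meas)
  have int: "(\<integral>\<^sup>+\<eta>. F (uu \<eta>) \<partial>G) = (\<integral>\<^sup>+v. F v * q v \<partial>Lm)" if F: "F \<in> borel_measurable Lm" for F
  proof -
    have "(\<integral>\<^sup>+\<eta>. F (uu \<eta>) \<partial>G) = (\<integral>\<^sup>+v. F v * (\<integral>\<^sup>+s. ennreal (real (Suc m) * (\<Prod>k<m. normal_density 0 \<sigma> (v k + (s - x k)))
              * normal_density 0 \<sigma> (real (Suc m) * s - (\<Sum>k<m. v k + (s - x k)))) \<partial>lborel) \<partial>Lm)"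
      unfolding G_def uu_def Lm_def by (rule main_integral[OF \<sigma>]) (use F in \<open>simp add: Lm_def\<close>)
    also have "\<dots> = (\<integral>\<^sup>+v. F v * q v \<partial>Lm)"
      unfolding q_def q_closed[OF \<sigma>] Kc_def Dq_def ..
    finally show ?thesis .
  qed
  have distr_uu: "distr G Lm uu = density Lm q"
  proof (rule measure_eqI)
    show "sets (distr G Lm uu) = sets (density Lm q)" by simp
  next
    fix A assume "A \<in> sets (distr G Lm uu)"
    then have A: "A \<in> sets Lm" by simp
    have "emeasure (distr G Lm uu) A = (\<integral>\<^sup>+v. indicator A v \<partial>distr G Lm uu)"
      using A by simp
    also have "\<dots> = (\<integral>\<^sup>+\<eta>. indicator A (uu \<eta>) \<partial>G)"
      by (rule nn_integral_distr[OF uu_meas]) (use A in simp)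
    also have "\<dots> = (\<integral>\<^sup>+v. indicator A v * q v \<partial>Lm)"
      by (rule int) (use A in simp)
    also have "\<dots> = emeasure (density Lm q) A"
      using A by (simp add: emeasure_density mult.commute)
    finally show "emeasure (distr G Lm uu) A = emeasure (density Lm q) A" .
  qed
  have lhs: "distr G Ln (\<lambda>\<eta>. pi_S (Suc m) C (\<lambda>k\<in>{..<Suc m}. x k + \<eta> k)) = distr (density Lm q) Ln h"
  proof -
    have "distr G Ln (\<lambda>\<eta>. pi_S (Suc m) C (\<lambda>k\<in>{..<Suc m}. x k + \<eta> k)) = distr G Ln (h \<circ> uu)"
    proof (rule distr_cong)
      fix \<eta> assume "\<eta> \<in> space G"
      show "pi_S (Suc m) C (\<lambda>k\<in>{..<Suc m}. x k + \<eta> k) = (h \<circ> uu) \<eta>"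
        unfolding comp_def h_def uu_def by (rule pi_S_hyp[OF x_in])
    qed (rule refl)+
    also have "\<dots> = distr (distr G Lm uu) Ln h"
      by (rule distr_distr[symmetric, OF h_meas uu_meas])
    finally show ?thesis unfolding distr_uu .
  qed
  define g where "g v = ennreal (sqrt (real (Suc m))) * ennreal (f (h v))" for v
  have fh_meas[measurable]: "(\<lambda>v. f (h v)) \<in> borel_measurable Lm"
    using measurable_comp[OF h_meas f_meas[folded Ln_def]] by (simp add: comp_def)
  have g_meas[measurable]: "g \<in> borel_measurable Lm"
    unfolding g_def by measurable
  have rhs: "density (hyp_measure (Suc m) C) (\<lambda>v. ennreal (f v)) = distr (density Lm g) Ln h"
  proof -
    have "hyp_measure (Suc m) C = distr (density Lm (\<lambda>_. ennreal (sqrt (real (Suc m))))) Ln h"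
      unfolding hyp_measure_def Lm_def Ln_def h_def by simp
    moreover have "density (distr (density Lm (\<lambda>_. ennreal (sqrt (real (Suc m))))) Ln h) (\<lambda>v. ennreal (f v))
        = distr (density (density Lm (\<lambda>_. ennreal (sqrt (real (Suc m))))) (\<lambda>v. ennreal (f (h v)))) Ln h"
      by (rule density_distr) (use h_meas f_meas in \<open>simp_all add: Ln_def\<close>)
    moreover have "density (density Lm (\<lambda>_. ennreal (sqrt (real (Suc m))))) (\<lambda>v. ennreal (f (h v))) = density Lm g"
      unfolding g_def
      by (rule density_density_eq) (use g_meas in \<open>simp_all add: g_def\<close>)
    ultimately show ?thesis by simp
  qed
  have eqd: "distr (density Lm q) Ln h = distr (density Lm g) Ln h"
    using f_density lhs rhs by (simp add: G_def Ln_def)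
  have r_meas: "(\<lambda>z. restrict z {..<m}) \<in> measurable Ln Lm"
    unfolding Ln_def Lm_def by measurable
  have backd: "distr (distr (density Lm p) Ln h) Lm (\<lambda>z. restrict z {..<m}) = density Lm p" for p
  proof -
    have "distr (distr (density Lm p) Ln h) Lm (\<lambda>z. restrict z {..<m}) = distr (density Lm p) Lm ((\<lambda>z. restrict z {..<m}) \<circ> h)"
      by (rule distr_distr) (use r_meas h_meas in simp_all)
    also have "\<dots> = distr (density Lm p) Lm (\<lambda>x. x)"
    proof (rule distr_cong)
      fix v assume v: "v \<in> space (density Lm p)"
      have "v \<in> PiE {..<m} (\<lambda>_. UNIV)" using v by (simp add: Lm_def space_PiM)
      then show "((\<lambda>z. restrict z {..<m}) \<circ> h) v = v"
        unfolding comp_def h_def by (rule restrict_hyp_param)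
    qed (rule refl)+
    also have "\<dots> = density Lm p" by (rule distr_id2) simp
    finally show ?thesis .
  qed
  have "density Lm q = distr (distr (density Lm q) Ln h) Lm (\<lambda>z. restrict z {..<m})" by (rule backd[symmetric])
  also have "\<dots> = distr (distr (density Lm g) Ln h) Lm (\<lambda>z. restrict z {..<m})" unfolding eqd ..
  also have "\<dots> = density Lm g" by (rule backd)
  finally have dq: "density Lm q = density Lm g" .
  have "AE v in Lm. q v = g v"
    using PL.density_unique[OF q_meas[unfolded Lm_def] g_meas[unfolded Lm_def] dq[unfolded Lm_def]]
    unfolding Lm_def .
  then show ?thesis unfolding Lm_def q_def g_def h_def .
qed



lemma ennreal_prod_pos: "finite A \<Longrightarrow> (\<And>i. i \<in> A \<Longrightarrow> 0 < f i) \<Longrightarrow> 0 < (\<Prod>i\<in>A. f i :: ennreal)"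
  by (induction A rule: finite_induct) (auto simp: ennreal_zero_less_mult_iff)

lemma lborel_open_pos:
  assumes "open X" "a \<in> X" shows "0 < emeasure lborel (X :: real set)"
proof -
  obtain e where e: "e > 0" "ball a e \<subseteq> X" using assms open_contains_ball by blast
  have "0 < emeasure lborel {a - e <..< a + e}" using e by simp
  also have "\<dots> \<le> emeasure lborel X"
    using e assms by (intro emeasure_mono) (auto simp: ball_eq_greaterThanLessThan)
  finally show ?thesis .
qed

lemma cont_ae_eq:
  fixes g1 g2 :: "(nat \<Rightarrow> real) \<Rightarrow> real" and I :: "nat set"
  assumes I: "finite I"
    and c1: "continuous_on (PiE I (\<lambda>_. UNIV)) g1" and c2: "continuous_on (PiE I (\<lambda>_. UNIV)) g2"
    and ae: "AE v in PiM I (\<lambda>_. lborel). g1 v = g2 v"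
    and v0: "v0 \<in> PiE I (\<lambda>_. UNIV)"
  shows "g1 v0 = g2 v0"
proof (rule ccontr)
  assume ne: "g1 v0 \<noteq> g2 v0"
  define S where "S = PiE I (\<lambda>_. UNIV :: real set)"
  have cd: "continuous_on S (\<lambda>v. g1 v - g2 v)" unfolding S_def using c1 c2 by (intro continuous_intros)
  have "open (-{0::real})" by auto
  moreover have "g1 v0 - g2 v0 \<in> -{0}" using ne by simp
  ultimately obtain A where A: "open A" "v0 \<in> A" "\<And>y. y \<in> S \<Longrightarrow> y \<in> A \<Longrightarrow> g1 y - g2 y \<in> -{0}"
    using cd v0 unfolding continuous_on_topological S_def by metis
  have "openin (product_topology (\<lambda>i. euclidean) UNIV) A" using A(1) unfolding open_fun_def .
  from product_topology_open_contains_basis[OF this A(2)]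
  obtain X where X: "v0 \<in> (\<Pi>\<^sub>E i\<in>UNIV. X i)" "\<And>i. openin euclidean (X i)" "(\<Pi>\<^sub>E i\<in>UNIV. X i) \<subseteq> A"
    by (auto simp del: PiE_UNIV_domain)
  have Xo: "open (X i)" for i using X(2) by simp
  have v0X: "v0 i \<in> X i" for i using X(1) by (auto simp: PiE_iff)
  define B where "B = PiE I X"
  have BA: "B \<subseteq> A"
  proof
    fix y assume y: "y \<in> B"
    have "y i \<in> X i" for i
    proof (cases "i \<in> I")
      case True then show ?thesis using y by (auto simp: B_def PiE_iff)
    next
      case False
      then have "y i = v0 i" using y v0 by (auto simp: B_def PiE_iff extensional_def)
      then show ?thesis using v0X by simp
    qed
    then have "y \<in> (\<Pi>\<^sub>E i\<in>UNIV. X i)" by (auto simp: PiE_iff)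
    then show "y \<in> A" using X(3) by blast
  qed
  have BS: "B \<subseteq> S" unfolding B_def S_def by (auto simp: PiE_iff)
  from ae obtain N where N: "{v \<in> space (PiM I (\<lambda>_. lborel)). \<not> g1 v = g2 v} \<subseteq> N"
      "emeasure (PiM I (\<lambda>_. lborel)) N = 0" "N \<in> sets (PiM I (\<lambda>_. lborel))"
    by (auto elim!: AE_E)
  have "B \<subseteq> N"
  proof
    fix y assume y: "y \<in> B"
    then have "y \<in> space (PiM I (\<lambda>_. lborel))" using BS unfolding S_def space_PiM by auto
    moreover have "g1 y \<noteq> g2 y" using A(3)[of y] y BS BA by auto
    ultimately show "y \<in> N" using N(1) by auto
  qed
  then have le0: "emeasure (PiM I (\<lambda>_. lborel)) B \<le> 0"
    using N by (metis emeasure_mono)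
  have "emeasure (PiM I (\<lambda>_. lborel)) B = (\<Prod>i\<in>I. emeasure lborel (X i))"
    unfolding B_def by (rule product_sigma_finite.emeasure_PiM) (auto simp: I Xo product_sigma_finite_def lborel.sigma_finite_measure_axioms)
  moreover have "0 < (\<Prod>i\<in>I. emeasure lborel (X i))"
    by (rule ennreal_prod_pos[OF I]) (rule lborel_open_pos[OF Xo v0X])
  ultimately show False using le0 by (metis not_le)
qed




lemma hyp_in_K: "hyp_param (Suc m) C v \<in> K_S (Suc m) C"
proof -
  have "(\<Sum>k<Suc m. hyp_param (Suc m) C v k) = (\<Sum>k<m. hyp_param (Suc m) C v k) + hyp_param (Suc m) C v m"
    by (rule sum.lessThan_Suc)
  also have "(\<Sum>k<m. hyp_param (Suc m) C v k) = (\<Sum>k<m. v k)"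
    by (intro sum.cong) (auto simp: hyp_param_def)
  also have "hyp_param (Suc m) C v m = C - (\<Sum>k<m. v k)" by (simp add: hyp_param_def)
  finally have "(\<Sum>k<Suc m. hyp_param (Suc m) C v k) = C" by simp
  moreover have "hyp_param (Suc m) C v \<in> PiE {..<Suc m} (\<lambda>_. UNIV)"
    unfolding hyp_param_Suc by simp
  ultimately show ?thesis by (simp add: K_S_def)
qed

lemma hyp_restrict:
  assumes y: "y \<in> K_S (Suc m) C"
  shows "hyp_param (Suc m) C (restrict y {..<m}) = y"
proof -
  have sy: "(\<Sum>k<m. y k) + y m = C" using y sum.lessThan_Suc[of y m] by (simp add: K_S_def)
  have yext: "y \<in> extensional {..<Suc m}" using y by (simp add: K_S_def PiE_def)
  show ?thesis
  proof (rule ext)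
    fix i
    show "hyp_param (Suc m) C (restrict y {..<m}) i = y i"
    proof (cases "i < m")
      case True then show ?thesis by (simp add: hyp_param_def)
    next
      case False
      show ?thesis
      proof (cases "i = m")
        case True
        have "(\<Sum>k<m. restrict y {..<m} k) = (\<Sum>k<m. y k)" by (intro sum.cong) auto
        then show ?thesis using True sy by (simp add: hyp_param_def)
      next
        case False2: False
        then have "i \<notin> {..<Suc m}" using False by simp
        then have "y i = undefined" using yext by (simp add: extensional_def)
        then show ?thesis using False False2 by (simp add: hyp_param_def)
      qed
    qed
  qed
qed

lemma Dq_K:
  assumes x: "x \<in> K_S (Suc m) C" and y: "y \<in> K_S (Suc m) C"
  shows "Dq m x (restrict y {..<m}) = (\<Sum>k<Suc m. (y k - x k)\<^sup>2)"
proof -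
  have sy: "(\<Sum>k<m. y k) + y m = C" using y sum.lessThan_Suc[of y m] by (simp add: K_S_def)
  have sx: "(\<Sum>k<m. x k) + x m = C" using x sum.lessThan_Suc[of x m] by (simp add: K_S_def)
  have a: "(\<Sum>k<m. (restrict y {..<m} k - x k)\<^sup>2) = (\<Sum>k<m. (y k - x k)\<^sup>2)" by (intro sum.cong) auto
  have b: "(\<Sum>k<m. restrict y {..<m} k - x k) = (\<Sum>k<m. y k) - (\<Sum>k<m. x k)"
    by (simp add: sum_subtractf)
  have c: "(\<Sum>k<m. y k) - (\<Sum>k<m. x k) = - (y m - x m)" using sx sy by linarith
  show ?thesis unfolding Dq_def a b c by (simp add: power2_commute)
qed

lemma sum_split2:
  assumes "finite A" "i \<in> A" "j \<in> A" "i \<noteq> j"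
  shows "sum F A = F i + F j + sum F (A - {i, j})"
proof -
  have "sum F A = F i + sum F (A - {i})" using assms by (simp add: sum.remove)
  also have "sum F (A - {i}) = F j + sum F (A - {i} - {j})" using assms by (intro sum.remove) auto
  also have "A - {i} - {j} = A - {i, j}" by auto
  finally show ?thesis by (simp add: add.assoc)
qed

lemma sw_K:
  assumes y: "y \<in> K_S n C" and ij: "i < n" "j < n"
  shows "sw i j y \<in> K_S n C"
proof -
  have ext: "y \<in> extensional {..<n}" and sy: "(\<Sum>k<n. y k) = C" using y by (auto simp: K_S_def PiE_def)
  have "sw i j y \<in> extensional {..<n}" using ext ij by (auto simp: sw_def extensional_def)
  moreover have "(\<Sum>k<n. sw i j y k) = (\<Sum>k<n. y k)"
  proof (cases "i = j")
    case True
    then have "sw i j y = y" by (auto simp: sw_def fun_eq_iff)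
    then show ?thesis by simp
  next
    case False
    have "(\<Sum>k<n. sw i j y k) = sw i j y i + sw i j y j + (\<Sum>k\<in>{..<n} - {i,j}. sw i j y k)"
      using ij False by (intro sum_split2) auto
    also have "(\<Sum>k\<in>{..<n} - {i,j}. sw i j y k) = (\<Sum>k\<in>{..<n} - {i,j}. y k)"
      by (intro sum.cong) (auto simp: sw_def)
    also have "sw i j y i + sw i j y j + (\<Sum>k\<in>{..<n} - {i,j}. y k) = y i + y j + (\<Sum>k\<in>{..<n} - {i,j}. y k)"
      using False by (simp add: sw_def)
    also have "\<dots> = (\<Sum>k<n. y k)" using ij False by (intro sum_split2[symmetric]) auto
    finally show ?thesis .
  qed
  ultimately show ?thesis using sy by (simp add: K_S_def PiE_def)
qed

lemma swap_ineq:
  fixes x y :: "nat \<Rightarrow> real"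
  assumes ij: "i < n" "j < n" and xij: "x i \<le> x j" and yij: "y i \<le> y j"
  shows "(\<Sum>k<n. (y k - x k)\<^sup>2) \<le> (\<Sum>k<n. (sw i j y k - x k)\<^sup>2)"
proof (cases "i = j")
  case True
  then have "sw i j y = y" by (auto simp: sw_def fun_eq_iff)
  then show ?thesis by simp
next
  case False
  let ?R = "{..<n} - {i,j}"
  have "(\<Sum>k<n. (y k - x k)\<^sup>2) = (y i - x i)\<^sup>2 + (y j - x j)\<^sup>2 + (\<Sum>k\<in>?R. (y k - x k)\<^sup>2)"
    using ij False by (intro sum_split2) auto
  moreover have "(\<Sum>k<n. (sw i j y k - x k)\<^sup>2) = (sw i j y i - x i)\<^sup>2 + (sw i j y j - x j)\<^sup>2 + (\<Sum>k\<in>?R. (sw i j y k - x k)\<^sup>2)"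
    using ij False by (intro sum_split2) auto
  moreover have "(\<Sum>k\<in>?R. (sw i j y k - x k)\<^sup>2) = (\<Sum>k\<in>?R. (y k - x k)\<^sup>2)"
    by (intro sum.cong) (auto simp: sw_def)
  moreover have "sw i j y i = y j" "sw i j y j = y i" using False by (auto simp: sw_def)
  moreover have "(y i - x i)\<^sup>2 + (y j - x j)\<^sup>2 \<le> (y j - x i)\<^sup>2 + (y i - x j)\<^sup>2"
  proof -
    have "0 \<le> (y j - y i) * (x j - x i)" using xij yij by simp
    then show ?thesis by (simp add: power2_eq_square algebra_simps)
  qed
  ultimately show ?thesis by simp
qed

lemma ennreal_eq_prod:
  fixes a s b :: real
  assumes a: "0 < a" and s: "0 < s" and e: "ennreal a = ennreal s * ennreal b"
  shows "b = a / s"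
proof -
  have e2: "ennreal a = ennreal (s * b)" using e s by (simp add: ennreal_mult')
  have "s * b > 0"
  proof (rule ccontr)
    assume "\<not> s * b > 0"
    then have "ennreal (s * b) = 0" by (simp add: ennreal_eq_0_iff)
    then show False using e2 a by simp
  qed
  then have "a = s * b" using e2 a by (simp add: ennreal_inj less_imp_le)
  then show ?thesis using s by (simp add: field_simps)
qed

lemma cont_coord: "continuous_on S (\<lambda>x::nat\<Rightarrow>real. x i)"
  by (rule continuous_on_subset[OF continuous_on_product_coordinates]) auto

lemma hyp_cont: "continuous_on S (hyp_param (Suc m) C)"
proof (rule continuous_on_coordinatewise_then_product)
  fix i
  show "continuous_on S (\<lambda>u. hyp_param (Suc m) C u i)"
  proof (cases "i < m")
    case True then show ?thesis by (simp add: hyp_param_def cont_coord)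
  next
    case False
    show ?thesis
    proof (cases "i = m")
      case True
      have "continuous_on S (\<lambda>u::nat\<Rightarrow>real. C - (\<Sum>k<m. u k))"
        by (intro continuous_intros cont_coord)
      then show ?thesis using True by (simp add: hyp_param_def)
    next
      case False2: False
      then show ?thesis using False by (simp add: hyp_param_def)
    qed
  qed
qed




theorem corollary2:
  fixes n :: nat and C \<sigma> :: real and x y :: "nat \<Rightarrow> real"
    and f :: "(nat \<Rightarrow> real) \<Rightarrow> real" and i j :: nat
  assumes n2: "n \<ge> 2" and Cpos: "C > 0" and x_in: "x \<in> K_S n C" and sigma_pos: "\<sigma> > 0"
    and f_meas: "f \<in> borel_measurable (PiM {..<n} (\<lambda>_. lborel))"
    and f_density: "distr (gauss_iso n \<sigma>) (PiM {..<n} (\<lambda>_. lborel))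
                       (\<lambda>\<eta>. pi_S n C (\<lambda>k\<in>{..<n}. x k + \<eta> k))
                     = density (hyp_measure n C) (\<lambda>v. ennreal (f v))"
    and f_cont: "continuous_on (K_S n C) f"
    and ij: "i < n" "j < n"
    and y_in: "y \<in> K_S n C"
    and xij: "x i \<le> x j" and yij: "y i \<le> y j"
  shows "f y \<ge> f (sw i j y)"
proof -
  obtain m where n: "n = Suc m" using n2 by (cases n) auto
  define h where "h = hyp_param (Suc m) C"
  define s where "s = sqrt (real (Suc m))"
  define g2 where "g2 v = Kc m \<sigma> * exp (- Dq m x v / (2 * \<sigma>\<^sup>2)) / s" for v
  have s0: "s > 0" unfolding s_def by simp
  have K0: "Kc m \<sigma> > 0" unfolding Kc_def using sigma_pos by simp
  have ae0: "AE v in PiM {..<m} (\<lambda>_. lborel). ennreal (Kc m \<sigma> * exp (- Dq m x v / (2 * \<sigma>\<^sup>2)))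
            = ennreal (sqrt (real (Suc m))) * ennreal (f (hyp_param (Suc m) C v))"
    by (rule ae_density) (use x_in sigma_pos f_meas f_density in \<open>simp_all add: n\<close>)
  have ae: "AE v in PiM {..<m} (\<lambda>_. lborel). f (h v) = g2 v"
    using ae0
  proof (rule eventually_mono)
    fix v assume "ennreal (Kc m \<sigma> * exp (- Dq m x v / (2 * \<sigma>\<^sup>2)))
            = ennreal (sqrt (real (Suc m))) * ennreal (f (hyp_param (Suc m) C v))"
    then show "f (h v) = g2 v" unfolding h_def g2_def s_def
      by (rule ennreal_eq_prod[rotated 2]) (use K0 in simp_all)
  qed
  have hK: "h ` PiE {..<m} (\<lambda>_. UNIV) \<subseteq> K_S n C" unfolding h_def n using hyp_in_K by blast
  have c1: "continuous_on (PiE {..<m} (\<lambda>_. UNIV)) (\<lambda>v. f (h v))"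
    by (rule continuous_on_compose2[OF f_cont _ hK]) (simp add: h_def hyp_cont)
  have c2: "continuous_on (PiE {..<m} (\<lambda>_. UNIV)) g2"
    unfolding g2_def Dq_def by (intro continuous_intros cont_coord) (use s0 sigma_pos in auto)
  have eq: "f (h v) = g2 v" if "v \<in> PiE {..<m} (\<lambda>_. UNIV)" for v
    by (rule cont_ae_eq[OF _ c1 c2 ae that]) simp
  have yK: "y \<in> K_S (Suc m) C" and xK: "x \<in> K_S (Suc m) C" using y_in x_in n by simp_all
  have swK: "sw i j y \<in> K_S (Suc m) C" using sw_K[OF y_in ij] n by simp
  have r: "restrict z {..<m} \<in> PiE {..<m} (\<lambda>_. UNIV)" for z :: "nat \<Rightarrow> real" by simp
  have fy: "f y = g2 (restrict y {..<m})"
    using eq[OF r[of y]] hyp_restrict[OF yK] by (simp add: h_def)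
  have fsw: "f (sw i j y) = g2 (restrict (sw i j y) {..<m})"
    using eq[OF r[of "sw i j y"]] hyp_restrict[OF swK] by (simp add: h_def)
  have D: "Dq m x (restrict y {..<m}) \<le> Dq m x (restrict (sw i j y) {..<m})"
    unfolding Dq_K[OF xK yK] Dq_K[OF xK swK] using swap_ineq[OF ij xij yij] n by simp
  have "exp (- Dq m x (restrict (sw i j y) {..<m}) / (2 * \<sigma>\<^sup>2)) \<le> exp (- Dq m x (restrict y {..<m}) / (2 * \<sigma>\<^sup>2))"
    using D sigma_pos by (simp add: divide_right_mono)
  then have "g2 (restrict (sw i j y) {..<m}) \<le> g2 (restrict y {..<m})"
    unfolding g2_def using K0 s0 by (simp add: divide_right_mono mult_left_mono)
  then show ?thesis using fy fsw by simp
qed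


end
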